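(* Let $B$ be a nonempty finite set and $M\subseteq\omega^B$ an upper set. Then the sequence $(\mu_0(M),\mu_1(M),\mu_2(M),\dots)$ is of one of the following forms: (1) $(0,0,\dots)$, which occurs if $M$ is empty; (2) $(0,\dots,0,r_0,\dots,r_{N-1},1,1,\dots)$ for some $N\in\omega$ and reals $0<r_0<\dots<r_{N-1}<1$; (3) $(0,\dots,0,r_0,r_1,\dots)$ for some strictly increasing sequence $(r_i)_{i\in\omega}$ of positive reals with $\lim_{i\to\infty}r_i=1$. In cases (2) and (3) the initial block of zeroes may be empty.
   Context: $\omega$ denotes the set of nonnegative integers and $\omega^B$ the set of functions $B\to\omega$, ordered pointwise. $M\subseteq\omega^B$ is an upper set if $f\in M$ and $f\le g$ imply $g\in M$. For $T\in\omega$, $\mu_T$ is the probability measure on $\omega^B$ that is uniform on $\{f\in\omega^B:\sum_{b\in B}f(b)=T\}$ and zero elsewhere. *)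

theory Defs
  imports "HOL-Probability.Probability"
begin

definition omega_fun :: "'b set \<Rightarrow> ('b \<Rightarrow> nat) set" where
  "omega_fun B = B \<rightarrow>\<^sub>E (UNIV :: nat set)"

definition upper_set :: "'b set \<Rightarrow> ('b \<Rightarrow> nat) set \<Rightarrow> bool" where
  "upper_set B M \<longleftrightarrow> M \<subseteq> omega_fun B \<and>
     (\<forall>f\<in>M. \<forall>g\<in>omega_fun B. (\<forall>b\<in>B. f b \<le> g b) \<longrightarrow> g \<in> M)"

definition level :: "'b set \<Rightarrow> nat \<Rightarrow> ('b \<Rightarrow> nat) set" where
  "level B T = {f \<in> omega_fun B. (\<Sum>b\<in>B. f b) = T}"

definition mu :: "'b set \<Rightarrow> nat \<Rightarrow> ('b \<Rightarrow> nat) pmf" where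
  "mu B T = pmf_of_set (level B T)"

end

theory Submission
  imports Defs
begin


lemma omega_fun_iff: "f \<in> omega_fun B \<longleftrightarrow> (\<forall>x. x \<notin> B \<longrightarrow> f x = undefined)"
  by (auto simp: omega_fun_def PiE_iff extensional_def)

lemma sum_upd_nat:
  assumes "finite B" "b \<in> B"
  shows "sum (f(b := v)) B + f b = sum f B + (v::nat)"
proof -
  have "sum (f(b := v)) B = v + sum f (B - {b})"
    using assms by (simp add: sum.remove)
  moreover have "sum f B = f b + sum f (B - {b})"
    using assms by (simp add: sum.remove)
  ultimately show ?thesis by simp
qed

lemma level_finite:
  assumes "finite B" shows "finite (level B T)"
proof -
  have "level B T \<subseteq> PiE B (\<lambda>_. {..T})"
  proof
    fix f assume f: "f \<in> level B T"
    then have "\<forall>b\<in>B. f b \<le> T"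
      using assms by (auto simp: level_def intro!: member_le_sum)
    then show "f \<in> PiE B (\<lambda>_. {..T})" using f
      by (auto simp: level_def omega_fun_def PiE_iff)
  qed
  then show ?thesis using assms by (meson finite_PiE finite_atMost finite_subset)
qed

lemma level_nonempty:
  assumes "finite B" "B \<noteq> {}" shows "level B T \<noteq> {}"
proof -
  obtain b0 where b0: "b0 \<in> B" using assms by auto
  define f where "f = (\<lambda>x. if x \<in> B then (if x = b0 then T else 0) else undefined)"
  have "sum f B = sum (\<lambda>x. if x = b0 then T else 0) B"
    by (rule sum.cong) (auto simp: f_def)
  also have "\<dots> = T" using b0 assms by simp
  finally have "f \<in> level B T"
    by (auto simp: level_def omega_fun_iff f_def)
  then show ?thesis by auto
qed

lemma upd_level:
  assumes "finite B" "b \<in> B" "f \<in> level B T"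
  shows "f(b := f b + 1) \<in> level B (Suc T)"
  using assms sum_upd_nat[OF assms(1,2), of f "f b + 1"]
  by (auto simp: level_def omega_fun_iff)

lemma downd_level:
  assumes "finite B" "b \<in> B" "g \<in> level B (Suc T)" "g b \<ge> 1"
  shows "g(b := g b - 1) \<in> level B T"
  using assms sum_upd_nat[OF assms(1,2), of g "g b - 1"]
  by (auto simp: level_def omega_fun_iff)

lemma double_count:
  assumes fin: "finite B" and S: "S \<subseteq> level B (Suc T)"
  shows "(\<Sum>f\<in>level B T. \<Sum>b\<in>B. if f(b := f b + 1) \<in> S then f b + 1 else 0)
         = Suc T * card S"
proof -
  define h where "h = (\<lambda>(f::'a\<Rightarrow>nat,b). (f(b := f b + 1), b))"
  define F where "F = (\<lambda>(g::'a\<Rightarrow>nat,b). if g \<in> S then g b else 0)"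
  have inj: "inj_on h (level B T \<times> B)"
  proof (rule inj_onI)
    fix x y assume x: "x \<in> level B T \<times> B" and y: "y \<in> level B T \<times> B" and e: "h x = h y"
    obtain f b where xf: "x = (f, b)" by (cases x)
    obtain f' b' where yf: "y = (f', b')" by (cases y)
    have bb: "b = b'" using e by (simp add: h_def xf yf)
    have "f(b := f b + 1) = f'(b := f' b + 1)" using e by (simp add: h_def xf yf bb)
    then have "f = f'"
      by (metis add_right_cancel fun_upd_apply fun_upd_triv fun_upd_upd bb)
    then show "x = y" using xf yf bb by simp
  qed
  have img: "h ` (level B T \<times> B) \<subseteq> level B (Suc T) \<times> B"
    using upd_level[OF fin] by (auto simp: h_def)
  have zero: "\<forall>x\<in>level B (Suc T) \<times> B - h ` (level B T \<times> B). F x = 0"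
  proof
    fix x assume x: "x \<in> level B (Suc T) \<times> B - h ` (level B T \<times> B)"
    obtain g b where xg: "x = (g, b)" by (cases x)
    show "F x = 0"
    proof (rule ccontr)
      assume "F x \<noteq> 0"
      then have gb: "g b \<ge> 1" by (auto simp: F_def xg split: if_splits)
      have "g(b := g b - 1) \<in> level B T" using downd_level[OF fin] x gb xg by auto
      moreover have "h (g(b := g b - 1), b) = x" using gb by (auto simp: h_def xg)
      ultimately show False using x xg by force
    qed
  qed
  have "(\<Sum>f\<in>level B T. \<Sum>b\<in>B. if f(b := f b + 1) \<in> S then f b + 1 else 0)
      = (\<Sum>x\<in>level B T \<times> B. F (h x))"
    unfolding sum.cartesian_product by (rule sum.cong) (auto simp: F_def h_def)
  also have "\<dots> = sum F (h ` (level B T \<times> B))"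
    using inj by (simp add: sum.reindex)
  also have "\<dots> = sum F (level B (Suc T) \<times> B)"
    by (rule sum.mono_neutral_left) (use img zero fin level_finite[OF fin] in auto)
  also have "\<dots> = (\<Sum>g\<in>level B (Suc T). \<Sum>b\<in>B. if g \<in> S then g b else 0)"
    by (simp add: sum.cartesian_product F_def)
  also have "\<dots> = (\<Sum>g\<in>level B (Suc T). if g \<in> S then Suc T else 0)"
    by (rule sum.cong) (auto simp: level_def)
  also have "\<dots> = (\<Sum>g\<in>S. Suc T)"
  proof -
    have "level B (Suc T) \<inter> {g. g \<in> S} = S" using S by auto
    then show ?thesis using level_finite[OF fin] by (simp add: sum.If_cases)
  qed
  finally show ?thesis by simp
qed


lemma sum_succ:
  assumes "f \<in> level B T"
  shows "(\<Sum>b\<in>B. f b + 1) = T + card B"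
proof -
  have "(\<Sum>b\<in>B. f b + 1) = (\<Sum>b\<in>B. f b) + (\<Sum>b\<in>B. 1)" by (rule sum.distrib)
  then show ?thesis using assms by (simp add: level_def)
qed

lemma upper_upd:
  assumes "upper_set B M" "f \<in> M" "b \<in> B"
  shows "f(b := f b + 1) \<in> M"
proof -
  have fo: "f \<in> omega_fun B" using assms unfolding upper_set_def by auto
  then have "f(b := f b + 1) \<in> omega_fun B" using assms by (auto simp: omega_fun_iff)
  then show ?thesis using assms fo unfolding upper_set_def by auto
qed

lemma card_level_rec:
  assumes fin: "finite B"
  shows "Suc T * card (level B (Suc T)) = (T + card B) * card (level B T)"
proof -
  have "Suc T * card (level B (Suc T)) =
     (\<Sum>f\<in>level B T. \<Sum>b\<in>B. if f(b := f b + 1) \<in> level B (Suc T) then f b + 1 else 0)"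
    using double_count[OF fin order_refl] by simp
  also have "\<dots> = (\<Sum>f\<in>level B T. T + card B)"
  proof (rule sum.cong)
    fix f assume f: "f \<in> level B T"
    have "(\<Sum>b\<in>B. if f(b := f b + 1) \<in> level B (Suc T) then f b + 1 else 0) = (\<Sum>b\<in>B. f b + 1)"
      by (rule sum.cong) (use upd_level[OF fin _ f] in auto)
    then show "(\<Sum>b\<in>B. if f(b := f b + 1) \<in> level B (Suc T) then f b + 1 else 0) = T + card B"
      using sum_succ[OF f] by simp
  qed simp
  finally show ?thesis by simp
qed

lemma card_M_rec:
  assumes fin: "finite B" and up: "upper_set B M"
  shows "(T + card B) * card (level B T \<inter> M) + (if (\<exists>f\<in>level B T - M. \<exists>b\<in>B. f(b := f b + 1) \<in> M) then 1 else 0)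
     \<le> Suc T * card (level B (Suc T) \<inter> M)"
proof -
  define G where "G = (\<lambda>f. \<Sum>b\<in>B. if f(b := f b + 1) \<in> level B (Suc T) \<inter> M then f b + 1 else 0)"
  have fl: "finite (level B T)" using level_finite[OF fin] .
  have "Suc T * card (level B (Suc T) \<inter> M) = sum G (level B T)"
    using double_count[OF fin, of "level B (Suc T) \<inter> M" T] by (simp add: G_def)
  also have "\<dots> = sum G (level B T \<inter> M) + sum G (level B T - M)"
    using fl by (simp add: sum.Int_Diff)
  also have "sum G (level B T \<inter> M) = (\<Sum>f\<in>level B T \<inter> M. T + card B)"
  proof (rule sum.cong)
    fix f assume f: "f \<in> level B T \<inter> M"
    have "G f = (\<Sum>b\<in>B. f b + 1)" unfolding G_def
      by (rule sum.cong) (use upd_level[OF fin _ ] upper_upd[OF up] f in auto)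
    then show "G f = T + card B" using sum_succ[of f B T] f by simp
  qed simp
  finally have eq: "Suc T * card (level B (Suc T) \<inter> M) = (T + card B) * card (level B T \<inter> M) + sum G (level B T - M)"
    by simp
  have "(if (\<exists>f\<in>level B T - M. \<exists>b\<in>B. f(b := f b + 1) \<in> M) then 1 else 0) \<le> sum G (level B T - M)"
  proof (cases "\<exists>f\<in>level B T - M. \<exists>b\<in>B. f(b := f b + 1) \<in> M")
    case True
    then obtain f b where f: "f \<in> level B T - M" and b: "b \<in> B" and m: "f(b := f b + 1) \<in> M" by blast
    have "1 \<le> (if f(b := f b + 1) \<in> level B (Suc T) \<inter> M then f b + 1 else 0)"
      using m upd_level[OF fin b] f by auto
    also have "\<dots> \<le> G f" unfolding G_def
      by (rule member_le_sum) (use b fin in auto)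
    also have "\<dots> \<le> sum G (level B T - M)"
      by (rule member_le_sum) (use f fl in auto)
    finally show ?thesis using True by simp
  qed simp
  then show ?thesis using eq by linarith
qed

lemma exists_boundary:
  assumes fin: "finite B" and up: "upper_set B M"
    and f: "f \<in> level B T \<inter> M" and g: "g \<in> level B T - M"
  shows "\<exists>h\<in>level B T - M. \<exists>b\<in>B. h(b := h b + 1) \<in> M"
  using g
proof (induction "\<Sum>b\<in>B. f b - g b" arbitrary: g rule: less_induct)
  case less
  show ?case
  proof (cases "\<forall>b\<in>B. f b \<le> g b")
    case True
    then have "g \<in> M" using f less.prems up unfolding upper_set_def level_def by auto
    then show ?thesis using less.prems by auto
  next
    case False
    then obtain a where a: "a \<in> B" "g a < f a" by auto
    have sf: "sum f B = T" and sg: "sum g B = T" using f less.prems by (auto simp: level_def)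
    obtain c where c: "c \<in> B" "f c < g c"
    proof (rule ccontr)
      assume "\<not> thesis"
      then have "\<forall>b\<in>B. g b \<le> f b" using that by force
      then have "sum g B < sum f B" using a fin by (meson sum_strict_mono_ex1)
      then show False using sf sg by simp
    qed
    have ac: "a \<noteq> c" using a c by auto
    define g' where "g' = g(a := g a + 1, c := g c - 1)"
    have "sum (g(a := g a + 1)) B + g a = sum g B + (g a + 1)" by (rule sum_upd_nat[OF fin a(1)])
    moreover have "sum g' B + g c = sum (g(a := g a + 1)) B + (g c - 1)"
      unfolding g'_def using sum_upd_nat[OF fin c(1), of "g(a := g a + 1)" "g c - 1"] ac by simp
    ultimately have "sum g' B = T" using sg c by linarith
    moreover have "g' \<in> omega_fun B" using less.prems a c
      by (auto simp: g'_def level_def omega_fun_iff)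
    ultimately have g'L: "g' \<in> level B T" by (simp add: level_def)
    show ?thesis
    proof (cases "g' \<in> M")
      case True
      have "g(a := g a + 1) \<in> omega_fun B" using less.prems a by (auto simp: level_def omega_fun_iff)
      moreover have "\<forall>b\<in>B. g' b \<le> (g(a := g a + 1)) b" using ac by (auto simp: g'_def)
      ultimately have "g(a := g a + 1) \<in> M" using True up unfolding upper_set_def by blast
      then show ?thesis using less.prems a by blast
    next
      case False
      have lt: "(\<Sum>b\<in>B. f b - g' b) < (\<Sum>b\<in>B. f b - g b)"
      proof -
        have le: "\<forall>b\<in>B. f b - g' b \<le> f b - g b" using ac c by (auto simp: g'_def)
        have "f a - g' a < f a - g a" using a ac by (auto simp: g'_def)
        then show ?thesis using le a fin by (meson sum_strict_mono_ex1)
      qed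
      show ?thesis by (rule less.hyps[OF lt]) (use g'L False in auto)
    qed
  qed
qed



lemma seq_cases:
  fixes p :: "nat \<Rightarrow> real"
  assumes b: "\<And>T. 0 \<le> p T \<and> p T \<le> 1"
    and m: "\<And>T. p T \<le> p (Suc T)"
    and s: "\<And>T. 0 < p T \<Longrightarrow> p T < 1 \<Longrightarrow> p T < p (Suc T)"
    and l: "p \<longlonglongrightarrow> 1"
  shows "(\<exists>(K::nat) (N::nat) (r::nat \<Rightarrow> real).
        (\<forall>i<N. 0 < r i \<and> r i < 1) \<and> (\<forall>i j. i < j \<and> j < N \<longrightarrow> r i < r j) \<and>
        (\<forall>T. p T = (if T < K then 0 else if T < K + N then r (T - K) else 1)))
   \<or> (\<exists>(K::nat) (r::nat \<Rightarrow> real).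
        (\<forall>i. 0 < r i) \<and> strict_mono r \<and> r \<longlonglongrightarrow> 1 \<and>
        (\<forall>T. p T = (if T < K then 0 else r (T - K))))"
proof -
  have inc: "incseq p" by (rule incseq_SucI) (rule m)
  have "eventually (\<lambda>T. p T > 1/2) sequentially" using l by (rule order_tendstoD) simp
  then obtain N0 where "\<And>n. n \<ge> N0 \<Longrightarrow> p n > 1/2" by (auto simp: eventually_sequentially)
  then have "p N0 > 1/2" by simp
  then have T0: "p N0 > 0" by linarith
  define K where "K = (LEAST T. p T > 0)"
  have pK: "p K > 0" unfolding K_def by (rule LeastI) (rule T0)
  have below: "\<And>T. T < K \<Longrightarrow> p T = 0"
  proof -
    fix T assume "T < K"
    then have "\<not> p T > 0" unfolding K_def by (rule not_less_Least)
    then show "p T = 0" using b[of T] by linarith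
  qed
  have above: "p T > 0" if "K \<le> T" for T using pK incseqD[OF inc that] by linarith
  show ?thesis
  proof (cases "\<exists>T. p T = 1")
    case True
    then obtain T1 where T1: "p T1 = 1" by blast
    define J where "J = (LEAST T. p T = 1)"
    have pJ: "p J = 1" unfolding J_def by (rule LeastI) (rule T1)
    have bJ: "p T < 1" if "T < J" for T
    proof -
      have "\<not> p T = 1" using that unfolding J_def by (rule not_less_Least)
      then show "p T < 1" using b[of T] by linarith
    qed
    have aJ: "p T = 1" if "J \<le> T" for T
      using pJ incseqD[OF inc that] b[of T] by simp
    have KJ: "K \<le> J" using below[of J] pJ by force
    define r where "r = (\<lambda>i. p (K + i))"
    have "\<forall>i<J - K. 0 < r i \<and> r i < 1" unfolding r_def using above bJ by simp
    moreover have "\<forall>i j. i < j \<and> j < J - K \<longrightarrow> r i < r j"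
    proof (intro allI impI)
      fix i j assume ij: "i < j \<and> j < J - K"
      have "p (K + i) < p (Suc (K + i))" using s[of "K+i"] above[of "K+i"] bJ[of "K+i"] ij by force
      also have "\<dots> \<le> p (K + j)" using ij by (intro incseqD[OF inc]) simp
      finally show "r i < r j" by (simp add: r_def)
    qed
    moreover have "\<forall>T. p T = (if T < K then 0 else if T < K + (J - K) then r (T - K) else 1)"
      using below aJ KJ by (auto simp: r_def)
    ultimately show ?thesis by blast
  next
    case False
    have lt1: "p T < 1" for T
    proof -
      have "p T \<noteq> 1" using False by blast
      then show ?thesis using b[of T] by linarith
    qed
    define r where "r = (\<lambda>i. p (i + K))"
    have "\<forall>i. 0 < r i" using above by (simp add: r_def)
    moreover have "strict_mono r" unfolding strict_mono_Suc_iff r_def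
    proof
      fix n show "p (n + K) < p (Suc n + K)" using s[of "n+K"] above[of "n+K"] lt1[of "n+K"] by simp
    qed
    moreover have "r \<longlonglongrightarrow> 1" unfolding r_def by (rule LIMSEQ_ignore_initial_segment[OF l])
    moreover have "\<forall>T. p T = (if T < K then 0 else r (T - K))" using below by (simp add: r_def)
    ultimately show ?thesis by blast
  qed
qed



lemma card_level_pos:
  assumes "finite B" "B \<noteq> {}" shows "card (level B T) > 0"
  using level_finite[OF assms(1)] level_nonempty[OF assms] by (simp add: card_gt_0_iff)

lemma p_step:
  assumes fin: "finite B" and ne: "B \<noteq> {}" and up: "upper_set B M"
  defines "P \<equiv> \<lambda>T. real (card (level B T \<inter> M)) / real (card (level B T))"
  shows "P T \<le> P (Suc T)" and "0 < P T \<Longrightarrow> P T < 1 \<Longrightarrow> P T < P (Suc T)"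
proof -
  define l where "l = card (level B T)"
  define l' where "l' = card (level B (Suc T))"
  define c where "c = card (level B T \<inter> M)"
  define c' where "c' = card (level B (Suc T) \<inter> M)"
  define n where "n = card B"
  define E where "E = (\<exists>f\<in>level B T - M. \<exists>b\<in>B. f(b := f b + 1) \<in> M)"
  define e :: nat where "e = (if E then 1 else 0)"
  have lp: "l > 0" "l' > 0" using card_level_pos[OF fin ne] by (auto simp: l_def l'_def)
  have r1: "Suc T * l' = (T + n) * l" using card_level_rec[OF fin] by (simp add: l_def l'_def n_def)
  have r2: "(T + n) * c + e \<le> Suc T * c'" using card_M_rec[OF fin up, of T] by (simp add: c_def c'_def n_def e_def E_def)
  have key: "Suc T * (c * l') + e * l \<le> Suc T * (c' * l)"
  proof -
    have "Suc T * (c * l') + e * l = ((T + n) * c) * l + e * l" using r1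
      by (metis mult.assoc mult.commute)
    also have "\<dots> = ((T + n) * c + e) * l" by (simp add: algebra_simps)
    also have "\<dots> \<le> (Suc T * c') * l" using r2 by (rule mult_le_mono1)
    finally show ?thesis by (simp add: algebra_simps)
  qed
  have "Suc T * (c * l') \<le> Suc T * (c' * l)" using key by linarith
  then have le: "c * l' \<le> c' * l" by (rule Suc_mult_le_cancel1[THEN iffD1])
  have conv: "P T \<le> P (Suc T) \<longleftrightarrow> real c * real l' \<le> real c' * real l"
    "P T < P (Suc T) \<longleftrightarrow> real c * real l' < real c' * real l"
    using lp by (simp_all add: P_def c_def c'_def l_def l'_def divide_simps)
  show "P T \<le> P (Suc T)" unfolding conv using le by (metis of_nat_le_iff of_nat_mult)
  assume p0: "0 < P T" and p1: "P T < 1"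
  have cpos: "c > 0"
  proof (rule ccontr)
    assume "\<not> c > 0" then have "c = 0" by simp
    then show False using p0 by (simp add: P_def c_def)
  qed
  have cl: "c < l" using p1 lp by (simp add: P_def c_def l_def divide_simps)
  obtain f where f: "f \<in> level B T \<inter> M" using cpos unfolding c_def by (metis card.empty ex_in_conv less_irrefl)
  obtain g where g: "g \<in> level B T - M"
  proof (rule ccontr)
    assume "\<not> thesis"
    then have "level B T \<inter> M = level B T" using that by blast
    then show False using cl by (simp add: c_def l_def)
  qed
  have E using exists_boundary[OF fin up f g] by (simp add: E_def)
  then have "e * l > 0" using lp by (simp add: e_def)
  then have "Suc T * (c * l') < Suc T * (c' * l)" using key by linarith
  then have "c * l' < c' * l" by (rule Suc_mult_less_cancel1[THEN iffD1])
  then show "P T < P (Suc T)" unfolding conv by (metis of_nat_less_iff of_nat_mult)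
qed

lemma ratio_lim:
  assumes fin: "finite B" and ne: "B \<noteq> {}"
  shows "(\<lambda>T. real (card (level B T)) / real (card (level B (T + s)))) \<longlonglongrightarrow> 1"
proof (induction s)
  case 0
  have "(\<lambda>T. real (card (level B T)) / real (card (level B (T + 0)))) = (\<lambda>T. 1)"
    using card_level_pos[OF fin ne] by (auto intro!: ext)
  then show ?case by simp
next
  case (Suc s)
  define n where "n = card B"
  have n1: "n \<ge> 1" using fin ne by (simp add: n_def Suc_le_eq card_gt_0_iff)
  have q: "(\<lambda>T. 1 - real (n - 1) / real (T + (s + n))) \<longlonglongrightarrow> 1 - 0"
    by (intro tendsto_diff tendsto_const LIMSEQ_ignore_initial_segment[OF lim_const_over_n])
  have eq: "real (card (level B (T + s))) / real (card (level B (T + Suc s)))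
      = 1 - real (n - 1) / real (T + (s + n))" for T
  proof -
    have r: "Suc (T + s) * card (level B (Suc (T + s))) = (T + s + n) * card (level B (T + s))"
      using card_level_rec[OF fin] by (simp add: n_def)
    have pos: "card (level B (Suc (T + s))) > 0" "card (level B (T + s)) > 0" using card_level_pos[OF fin ne] by auto
    have "real (card (level B (T + s))) / real (card (level B (T + Suc s))) = real (Suc (T + s)) / real (T + s + n)"
    proof -
      have rr: "real (card (level B (T + s))) * real (T + s + n) = real (Suc (T + s)) * real (card (level B (Suc (T + s))))"
        using arg_cong[OF r, of real] by (simp only: of_nat_mult mult.commute)
      have "T + Suc s = Suc (T + s)" by simp
      then show ?thesis using pos n1 rr by (simp only: frac_eq_eq of_nat_eq_0_iff)
    qed
    also have "\<dots> = 1 - real (n - 1) / real (T + (s + n))" using n1 by (simp add: divide_simps of_nat_diff algebra_simps)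
    finally show ?thesis .
  qed
  have lim: "(\<lambda>T. real (card (level B T)) / real (card (level B (T + s))) *
      (1 - real (n - 1) / real (T + (s + n)))) \<longlonglongrightarrow> 1 * (1 - 0)"
    by (rule tendsto_mult[OF Suc q])
  have fe: "real (card (level B T)) / real (card (level B (T + s))) *
      (1 - real (n - 1) / real (T + (s + n)))
      = real (card (level B T)) / real (card (level B (T + Suc s)))" for T
  proof -
    have p: "real (card (level B (T + s))) \<noteq> 0" using card_level_pos[OF fin ne, of "T + s"] by simp
    have "real (card (level B T)) / real (card (level B (T + s))) *
      (1 - real (n - 1) / real (T + (s + n))) = real (card (level B T)) / real (card (level B (T + s))) *
      (real (card (level B (T + s))) / real (card (level B (T + Suc s))))" by (simp only: eq)
    also have "\<dots> = real (card (level B T)) / real (card (level B (T + Suc s)))" using p by simp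
    finally show ?thesis .
  qed
  show ?case using lim by (simp only: fe) simp
qed



lemma P_bounds:
  assumes "finite B"
  shows "0 \<le> real (card (level B T \<inter> M)) / real (card (level B T))
       \<and> real (card (level B T \<inter> M)) / real (card (level B T)) \<le> 1"
proof -
  have "card (level B T \<inter> M) \<le> card (level B T)"
    by (rule card_mono) (use level_finite[OF assms] in auto)
  then show ?thesis by (cases "card (level B T) = 0") (simp_all add: divide_le_eq_1)
qed

lemma P_lim:
  assumes fin: "finite B" and ne: "B \<noteq> {}" and up: "upper_set B M" and Mne: "M \<noteq> {}"
  shows "(\<lambda>T. real (card (level B T \<inter> M)) / real (card (level B T))) \<longlonglongrightarrow> 1"
proof -
  obtain f0 where f0: "f0 \<in> M" using Mne by auto
  have f0o: "f0 \<in> omega_fun B" using f0 up by (auto simp: upper_set_def)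
  define s where "s = sum f0 B"
  define \<phi> where "\<phi> = (\<lambda>g x. if x \<in> B then g x + f0 x else undefined)"
  have cle: "card (level B T) \<le> card (level B (T + s) \<inter> M)" for T
  proof (rule card_inj_on_le)
    show "inj_on \<phi> (level B T)"
    proof (rule inj_onI)
      fix g g' assume g: "g \<in> level B T" and g': "g' \<in> level B T" and e: "\<phi> g = \<phi> g'"
      show "g = g'"
      proof
        fix x show "g x = g' x"
        proof (cases "x \<in> B")
          case True then show ?thesis using fun_cong[OF e, of x] by (simp add: \<phi>_def)
        next
          case False then show ?thesis using g g' by (simp add: level_def omega_fun_iff)
        qed
      qed
    qed
    show "\<phi> ` level B T \<subseteq> level B (T + s) \<inter> M"
    proof
      fix h assume "h \<in> \<phi> ` level B T"
      then obtain g where g: "g \<in> level B T" and h: "h = \<phi> g" by auto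
      have ho: "h \<in> omega_fun B" by (simp add: h \<phi>_def omega_fun_iff)
      have "sum h B = sum (\<lambda>x. g x + f0 x) B" by (rule sum.cong) (auto simp: h \<phi>_def)
      also have "\<dots> = T + s" using g by (simp add: sum.distrib s_def level_def)
      finally have "h \<in> level B (T + s)" using ho by (simp add: level_def)
      moreover have "h \<in> M" using up f0 ho unfolding upper_set_def by (auto simp: h \<phi>_def)
      ultimately show "h \<in> level B (T + s) \<inter> M" by simp
    qed
    show "finite (level B (T + s) \<inter> M)" using level_finite[OF fin] by simp
  qed
  have "(\<lambda>T. real (card (level B (T + s) \<inter> M)) / real (card (level B (T + s)))) \<longlonglongrightarrow> 1"
  proof (rule tendsto_sandwich[OF _ _ ratio_lim[OF fin ne, of s] tendsto_const])
    show "\<forall>\<^sub>F T in sequentially. real (card (level B T)) / real (card (level B (T + s)))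
       \<le> real (card (level B (T + s) \<inter> M)) / real (card (level B (T + s)))"
    proof (rule always_eventually, rule allI)
      fix T
      show "real (card (level B T)) / real (card (level B (T + s)))
       \<le> real (card (level B (T + s) \<inter> M)) / real (card (level B (T + s)))"
        by (rule divide_right_mono) (use cle[of T] in simp_all)
    qed
    show "\<forall>\<^sub>F T in sequentially. real (card (level B (T + s) \<inter> M)) / real (card (level B (T + s))) \<le> 1"
      using P_bounds[OF fin] by auto
  qed
  then show ?thesis by (rule LIMSEQ_offset)
qed

theorem theorem6:
  fixes B :: "'b set" and M :: "('b \<Rightarrow> nat) set"
  assumes "finite B" and "B \<noteq> {}" and "upper_set B M"
  shows "(M = {} \<and> (\<forall>T. measure_pmf.prob (mu B T) M = 0))
   \<or> (\<exists>(K::nat) (N::nat) (r::nat \<Rightarrow> real).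
        (\<forall>i<N. 0 < r i \<and> r i < 1) \<and> (\<forall>i j. i < j \<and> j < N \<longrightarrow> r i < r j) \<and>
        (\<forall>T. measure_pmf.prob (mu B T) M =
               (if T < K then 0 else if T < K + N then r (T - K) else 1)))
   \<or> (\<exists>(K::nat) (r::nat \<Rightarrow> real).
        (\<forall>i. 0 < r i) \<and> strict_mono r \<and> r \<longlonglongrightarrow> 1 \<and>
        (\<forall>T. measure_pmf.prob (mu B T) M = (if T < K then 0 else r (T - K))))"
proof -
  define P where "P = (\<lambda>T. real (card (level B T \<inter> M)) / real (card (level B T)))"
  have PP: "measure_pmf.prob (mu B T) M = P T" for T
    unfolding mu_def P_def
    by (rule measure_pmf_of_set[OF level_nonempty[OF assms(1,2)] level_finite[OF assms(1)]])
  show ?thesis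
  proof (cases "M = {}")
    case True
    then show ?thesis by simp
  next
    case False
    have "(\<exists>(K::nat) (N::nat) (r::nat \<Rightarrow> real).
        (\<forall>i<N. 0 < r i \<and> r i < 1) \<and> (\<forall>i j. i < j \<and> j < N \<longrightarrow> r i < r j) \<and>
        (\<forall>T. P T = (if T < K then 0 else if T < K + N then r (T - K) else 1)))
     \<or> (\<exists>(K::nat) (r::nat \<Rightarrow> real).
        (\<forall>i. 0 < r i) \<and> strict_mono r \<and> r \<longlonglongrightarrow> 1 \<and>
        (\<forall>T. P T = (if T < K then 0 else r (T - K))))"
    proof (rule seq_cases)
      show "0 \<le> P T \<and> P T \<le> 1" for T unfolding P_def by (rule P_bounds[OF assms(1)])
      show "P T \<le> P (Suc T)" for T unfolding P_def by (rule p_step(1)[OF assms])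
      show "P T < P (Suc T)" if "0 < P T" "P T < 1" for T
        using that unfolding P_def by (rule p_step(2)[OF assms])
      show "P \<longlonglongrightarrow> 1" unfolding P_def by (rule P_lim[OF assms False])
    qed
    then show ?thesis unfolding PP by blast
  qed
qed

end
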